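(* For every integer $r$ and every integer $n\ge 0$, \[ 2\sum_{j=0}^{n}(-1)^{rj}4^jF_r^{2n-2j}5^{n-j}=\sum_{j=0}^{n}\left(\frac{L_r^2}{2}\right)^j\left(5^{n-j}F_r^{2(n-j)}+(-1)^{r(n-j)}4^{n-j}\right)=2\,\frac{(5F_r^2)^{n+1}-(-1)^{r(n+1)}4^{n+1}}{5F_r^2-(-1)^r4}. \]
   Context: $F_n$ and $L_n$ denote the Fibonacci and Lucas numbers, defined for all integers $n$ by $F_0=0,F_1=1$, $L_0=2,L_1=1$ and $x_n=x_{n-1}+x_{n-2}$; equivalently $F_n=(\alpha^n-\beta^n)/(\alpha-\beta)$, $L_n=\alpha^n+\beta^n$ with $\alpha=(1+\sqrt5)/2$, $\beta=(1-\sqrt5)/2$. In particular $F_{-n}=(-1)^{n-1}F_n$ and $L_{-n}=(-1)^nL_n$. *)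

theory Defs
  imports Complex_Main "HOL-Number_Theory.Fib"
begin

definition fibz :: "int \<Rightarrow> int" where
  "fibz n = (if n \<ge> 0 then int (fib (nat n))
             else (-1) ^ (nat (-n) + 1) * int (fib (nat (-n))))"

fun lucn :: "nat \<Rightarrow> int" where
  "lucn 0 = 2"
| "lucn (Suc 0) = 1"
| "lucn (Suc (Suc n)) = lucn (Suc n) + lucn n"

definition lucz :: "int \<Rightarrow> int" where
  "lucz n = (if n \<ge> 0 then lucn (nat n)
             else (-1) ^ nat (-n) * lucn (nat (-n)))"

end

theory Submission
  imports Defs
begin

lemma lucn_fib: "lucn n = 2 * int (fib (Suc n)) - int (fib n)"
  by (induction n rule: lucn.induct) auto

lemma cass: "int (fib (Suc n))^2 - int (fib (Suc n)) * int (fib n) - int (fib n)^2 = (-1)^n"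
proof (induction n)
  case 0 then show ?case by simp
next
  case (Suc n)
  then show ?case by (simp add: power2_eq_square algebra_simps)
qed

lemma lucn_sq: "(lucn n)^2 = 5 * int (fib n)^2 + 4 * (-1)^n"
  using cass[of n] unfolding lucn_fib by (simp add: power2_eq_square algebra_simps)

lemma luc_sq: "real_of_int (lucz r)^2 = 5 * real_of_int (fibz r)^2 + (-1::real) powi r * 4"
proof (cases "r \<ge> 0")
  case True
  then obtain m where r: "r = int m" by (metis nonneg_eq_int)
  have "real_of_int ((lucn m)^2) = real_of_int (5 * int (fib m)^2 + 4 * (-1)^m)"
    using lucn_sq by simp
  then show ?thesis using r by (simp add: lucz_def fibz_def)
next
  case False
  then obtain m where r: "r = - int m" by (metis linear minus_minus neg_0_le_iff_le nonneg_eq_int)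
  have "real_of_int ((lucn m)^2) = real_of_int (5 * int (fib m)^2 + 4 * (-1)^m)"
    using lucn_sq by simp
  moreover have "(-1::real) powi r = (-1)^m" using r by (simp add: power_int_minus_one_minus)
  moreover have "((-1::real)^m)^2 = 1" by (cases "even m") auto
  ultimately show ?thesis using r False
    by (simp add: lucz_def fibz_def power_mult_distrib)
qed

lemma neq: "5 * real_of_int (fibz r)^2 - (-1::real) powi r * 4 \<noteq> 0"
proof -
  have m: "(-1::real) powi r = 1 \<or> (-1::real) powi r = -1"
    by (metis power_int_minus_one_minus nonneg_eq_int linear minus_minus neg_0_le_iff_le
        power_int_of_nat neg_one_even_power neg_one_odd_power)
  have "5 * (fibz r)^2 \<noteq> 4"
  proof
    assume "5 * (fibz r)^2 = 4"
    then have "(5 * (fibz r)^2) mod 5 = 4 mod 5" by simp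
    then show False by simp
  qed
  then have a: "5 * real_of_int (fibz r)^2 \<noteq> 4"
    by (metis of_int_eq_iff of_int_mult of_int_numeral of_int_power)
  have b: "5 * real_of_int (fibz r)^2 \<noteq> -4"
    by (smt (verit) zero_le_power2)
  show ?thesis using m a b by auto
qed

lemma gen:
  fixes a b :: real
  shows "(\<Sum>j=0..n. ((a+b)/2) ^ j * (a^(n-j) + b^(n-j))) = 2 * (\<Sum>j=0..n. b^j * a^(n-j))"
proof (induction n)
  case 0 then show ?case by simp
next
  case (Suc n)
  have h: "2 * (\<Sum>j=0..Suc n. b^j * a^(Suc n-j)) = (a+b) * (\<Sum>j=0..n. b^j * a^(n-j)) + a^(Suc n) + b^(Suc n)"
  proof -
    have 1: "(\<Sum>j=0..Suc n. b^j * a^(Suc n-j)) = a * (\<Sum>j=0..n. b^j * a^(n-j)) + b^(Suc n)"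
    proof -
      have "(\<Sum>j=0..Suc n. b^j * a^(Suc n-j)) = (\<Sum>j=0..n. b^j * a^(Suc n-j)) + b^(Suc n)"
        by simp
      also have "(\<Sum>j=0..n. b^j * a^(Suc n-j)) = (\<Sum>j=0..n. a * (b^j * a^(n-j)))"
        by (rule sum.cong) (auto simp: Suc_diff_le)
      finally show ?thesis by (simp add: sum_distrib_left)
    qed
    have 2: "(\<Sum>j=0..Suc n. b^j * a^(Suc n-j)) = b * (\<Sum>j=0..n. b^j * a^(n-j)) + a^(Suc n)"
      by (subst sum.atLeast0_atMost_Suc_shift) (simp add: sum_distrib_left algebra_simps)
    show ?thesis using 1 2 by (simp add: algebra_simps)
  qed
  have "(\<Sum>j=0..Suc n. ((a+b)/2) ^ j * (a^(Suc n-j) + b^(Suc n-j)))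
      = (a^(Suc n) + b^(Suc n)) + ((a+b)/2) * (\<Sum>j=0..n. ((a+b)/2) ^ j * (a^(n-j) + b^(n-j)))"
    by (subst sum.atLeast0_atMost_Suc_shift) (simp add: sum_distrib_left algebra_simps)
  then show ?case using Suc h by simp
qed

lemma geo:
  fixes a b :: real
  assumes "a - b \<noteq> 0"
  shows "(\<Sum>j=0..n. b^j * a^(n-j)) = (a^(n+1) - b^(n+1)) / (a - b)"
proof -
  have "a^(n+1) - b^(n+1) = (a - b) * (\<Sum>i<n+1. b^(n+1 - Suc i) * a^i)"
    by (rule power_diff_sumr2)
  also have "(\<Sum>i<n+1. b^(n+1 - Suc i) * a^i) = (\<Sum>j=0..n. b^j * a^(n-j))"
    by (rule sum.reindex_bij_witness[where i="\<lambda>j. n - j" and j="\<lambda>i. n - i"]) auto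
  finally show ?thesis using assms by simp
qed

theorem theorem6:
  fixes r :: int and n :: nat
  shows "2 * (\<Sum>j=0..n. (-1::real) powi (r * int j) * 4 ^ j
              * (real_of_int (fibz r)) ^ (2*n - 2*j) * 5 ^ (n - j))
       = (\<Sum>j=0..n. ((real_of_int (lucz r))\<^sup>2 / 2) ^ j
              * (5 ^ (n - j) * (real_of_int (fibz r)) ^ (2 * (n - j))
                 + (-1::real) powi (r * int (n - j)) * 4 ^ (n - j)))
   \<and> (\<Sum>j=0..n. ((real_of_int (lucz r))\<^sup>2 / 2) ^ j
              * (5 ^ (n - j) * (real_of_int (fibz r)) ^ (2 * (n - j))
                 + (-1::real) powi (r * int (n - j)) * 4 ^ (n - j)))
       = 2 * (((5 * (real_of_int (fibz r))\<^sup>2) ^ (n + 1)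
                - (-1::real) powi (r * int (n + 1)) * 4 ^ (n + 1))
              / (5 * (real_of_int (fibz r))\<^sup>2 - (-1::real) powi r * 4))"
proof -
  define a where "a = 5 * (real_of_int (fibz r))\<^sup>2"
  define b where "b = (-1::real) powi r * 4"
  have pb: "(-1::real) powi (r * int k) * 4 ^ k = b ^ k" for k
    by (simp add: b_def power_int_mult power_mult_distrib)
  have pa: "5 ^ k * (real_of_int (fibz r)) ^ (2 * k) = a ^ k" for k
    by (simp add: a_def power_mult power_mult_distrib)
  have L: "(real_of_int (lucz r))\<^sup>2 / 2 = (a+b)/2" using luc_sq by (simp add: a_def b_def)
  have S1: "(\<Sum>j=0..n. (-1::real) powi (r * int j) * 4 ^ j
              * (real_of_int (fibz r)) ^ (2*n - 2*j) * 5 ^ (n - j)) = (\<Sum>j=0..n. b^j * a^(n-j))"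
  proof (rule sum.cong[OF refl])
    fix j assume "j \<in> {0..n}"
    have "2*n - 2*j = 2*(n-j)" by simp
    then show "(-1::real) powi (r * int j) * 4 ^ j * (real_of_int (fibz r)) ^ (2*n - 2*j) * 5 ^ (n - j)
       = b^j * a^(n-j)" using pb[of j] pa[of "n-j"] by (simp add: algebra_simps)
  qed
  have S2: "(\<Sum>j=0..n. ((real_of_int (lucz r))\<^sup>2 / 2) ^ j
              * (5 ^ (n - j) * (real_of_int (fibz r)) ^ (2 * (n - j))
                 + (-1::real) powi (r * int (n - j)) * 4 ^ (n - j)))
      = (\<Sum>j=0..n. ((a+b)/2) ^ j * (a^(n-j) + b^(n-j)))"
  proof (rule sum.cong[OF refl])
    fix j assume "j \<in> {0..n}"
    show "((real_of_int (lucz r))\<^sup>2 / 2) ^ j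
              * (5 ^ (n - j) * (real_of_int (fibz r)) ^ (2 * (n - j))
                 + (-1::real) powi (r * int (n - j)) * 4 ^ (n - j)) = ((a+b)/2) ^ j * (a^(n-j) + b^(n-j))"
      by (simp only: pa pb L)
  qed
  have ne: "a - b \<noteq> 0" using neq unfolding a_def b_def .
  show ?thesis unfolding S1 S2 gen
    using geo[OF ne, of n] pb[of "n+1"] by (simp add: a_def b_def)
qed

end
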